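(* In every 2-connected partial 2-tree (series-parallel graph) $G$, all longest cycles have a common vertex, i.e. $\mathrm{lct}(G)\le 1$.
   Context: A $k$-tree is defined recursively: the complete graph on $k$ vertices is a $k$-tree, and adding a new vertex adjacent to exactly the vertices of an existing $k$-clique of a $k$-tree yields a $k$-tree. A partial $k$-tree is a subgraph of a $k$-tree. $\mathrm{lct}(G)$ is the minimum cardinality of a set of vertices intersecting every longest cycle of $G$. *)

theory Defs
  imports Main
begin

definition graph :: "'a set \<Rightarrow> 'a set set \<Rightarrow> bool" where
  "graph V E \<longleftrightarrow> finite V \<and> (\<forall>e\<in>E. \<exists>u v. u \<noteq> v \<and> e = {u, v} \<and> u \<in> V \<and> v \<in> V)"

definition complete_edges :: "'a set \<Rightarrow> 'a set set" where
  "complete_edges V = {{u, v} | u v. u \<in> V \<and> v \<in> V \<and> u \<noteq> v}"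

definition is_clique :: "'a set set \<Rightarrow> 'a set \<Rightarrow> bool" where
  "is_clique E C \<longleftrightarrow> (\<forall>u\<in>C. \<forall>v\<in>C. u \<noteq> v \<longrightarrow> {u, v} \<in> E)"

inductive k_tree :: "nat \<Rightarrow> 'a set \<Rightarrow> 'a set set \<Rightarrow> bool" for k :: nat where
  base: "finite V \<Longrightarrow> card V = k \<Longrightarrow> k_tree k V (complete_edges V)"
| step: "k_tree k V E \<Longrightarrow> C \<subseteq> V \<Longrightarrow> card C = k \<Longrightarrow> is_clique E C \<Longrightarrow> v \<notin> V \<Longrightarrow>
         k_tree k (insert v V) (E \<union> {{v, c} | c. c \<in> C})"

definition partial_k_tree :: "nat \<Rightarrow> 'a set \<Rightarrow> 'a set set \<Rightarrow> bool" where
  "partial_k_tree k V E \<longleftrightarrow> (\<exists>V' E'. k_tree k V' E' \<and> V \<subseteq> V' \<and> E \<subseteq> E')"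

definition connected_graph :: "'a set \<Rightarrow> 'a set set \<Rightarrow> bool" where
  "connected_graph V E \<longleftrightarrow> V \<noteq> {} \<and>
     (\<forall>u\<in>V. \<forall>v\<in>V. (\<lambda>x y. x \<in> V \<and> y \<in> V \<and> {x, y} \<in> E)\<^sup>*\<^sup>* u v)"

definition del_vertex_edges :: "'a set set \<Rightarrow> 'a \<Rightarrow> 'a set set" where
  "del_vertex_edges E x = {e \<in> E. x \<notin> e}"

definition two_connected :: "'a set \<Rightarrow> 'a set set \<Rightarrow> bool" where
  "two_connected V E \<longleftrightarrow> card V \<ge> 3 \<and> connected_graph V E \<and>
     (\<forall>x\<in>V. connected_graph (V - {x}) (del_vertex_edges E x))"

definition is_cycle :: "'a set \<Rightarrow> 'a set set \<Rightarrow> 'a list \<Rightarrow> bool" where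
  "is_cycle V E c \<longleftrightarrow> length c \<ge> 3 \<and> distinct c \<and> set c \<subseteq> V \<and>
     (\<forall>i < length c. {c ! i, c ! ((i + 1) mod length c)} \<in> E)"

definition longest_cycle :: "'a set \<Rightarrow> 'a set set \<Rightarrow> 'a list \<Rightarrow> bool" where
  "longest_cycle V E c \<longleftrightarrow> is_cycle V E c \<and> (\<forall>d. is_cycle V E d \<longrightarrow> length d \<le> length c)"

end

theory Submission
  imports Defs
begin

fun pe :: "'a list \<Rightarrow> 'a set set" where
  "pe (x#y#zs) = insert {x,y} (pe (y#zs))"
| "pe _ = {}"

definition ce :: "'a list \<Rightarrow> 'a set set" where "ce c = pe (c @ [hd c])"

lemma pe_snoc: "xs \<noteq> [] \<Longrightarrow> pe (xs @ [y]) = insert {last xs, y} (pe xs)"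
  by (induction xs rule: pe.induct) auto

lemma pe_Cons: "xs \<noteq> [] \<Longrightarrow> pe (x # xs) = insert {x, hd xs} (pe xs)"
  by (cases xs) auto

lemma ce_ne: "c \<noteq> [] \<Longrightarrow> ce c = insert {last c, hd c} (pe c)"
  by (simp add: ce_def pe_snoc)

lemma pe_sub: "e \<in> pe xs \<Longrightarrow> e \<subseteq> set xs"
  by (induction xs rule: pe.induct) auto

lemma ce_sub: assumes "e \<in> ce c" shows "e \<subseteq> set c"
proof (cases "c = []")
  case True then show ?thesis using assms by (simp add: ce_def)
next
  case False
  show ?thesis using assms using False ce_ne[of c] pe_sub[of e c] by auto
qed

lemma finite_pe: "finite (pe xs)"
  by (induction xs rule: pe.induct) auto

lemma finite_ce: "finite (ce c)"
  by (simp add: ce_def finite_pe)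

lemma set_sub_pe: "2 \<le> length xs \<Longrightarrow> set xs \<subseteq> \<Union>(pe xs)"
proof (induction xs rule: pe.induct)
  case (1 x y zs)
  then show ?case by (cases zs) auto
qed auto

lemma set_sub_ce: "2 \<le> length c \<Longrightarrow> set c \<subseteq> \<Union>(ce c)"
proof -
  assume a: "2 \<le> length c"
  then have "c \<noteq> []" by auto
  then show ?thesis using set_sub_pe[OF a] ce_ne[of c] by auto
qed

lemma card_pe: "distinct xs \<Longrightarrow> card (pe xs) = length xs - 1"
proof (induction xs rule: pe.induct)
  case (1 x y zs)
  have "{x,y} \<notin> pe (y#zs)" using 1(2) pe_sub by fastforce
  then show ?case using 1 by (simp add: finite_pe)
qed auto

lemma pe_split: "e \<in> pe xs \<Longrightarrow> \<exists>l x y r. xs = l @ x # y # r \<and> e = {x,y}"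
proof (induction xs rule: pe.induct)
  case (1 x y zs)
  show ?case
  proof (cases "e = {x,y}")
    case True then show ?thesis by (metis append_Nil)
  next
    case False
    then have "e \<in> pe (y#zs)" using 1(2) by simp
    from 1(1)[OF this] obtain l a b r where "y#zs = l @ a # b # r" "e = {a,b}" by blast
    then show ?thesis by (metis append_Cons)
  qed
qed auto

lemma closing_notin_pe:
  assumes "distinct c" "3 \<le> length c"
  shows "{last c, hd c} \<notin> pe c"
proof
  assume "{last c, hd c} \<in> pe c"
  then obtain l x y r where c: "c = l @ x # y # r" and e: "{last c, hd c} = {x,y}"
    using pe_split by blast
  have lc: "last c = last (y#r)" using c by simp
  have "last (y#r) \<in> set (y#r)" by simp
  have dx: "x \<notin> set (y#r)" "x \<notin> set l" "y \<notin> set r" "y \<notin> set l"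
    using assms(1) c by auto
  from e have "(last c = x \<and> hd c = y) \<or> (last c = y \<and> hd c = x)"
    by (auto simp: doubleton_eq_iff)
  then show False
  proof
    assume "last c = x \<and> hd c = y"
    then show False using lc dx(1) last_in_set by (metis list.distinct(1))
  next
    assume h: "last c = y \<and> hd c = x"
    have l: "l = []"
    proof (rule ccontr)
      assume "l \<noteq> []"
      then have "hd c = hd l" using c by simp
      then show False using h dx(2) \<open>l \<noteq> []\<close> by (metis list.set_sel(1))
    qed
    have r: "r = []"
    proof (rule ccontr)
      assume "r \<noteq> []"
      then have "last c = last r" using c by simp
      then show False using h dx(3) \<open>r \<noteq> []\<close> by (metis last_in_set)
    qed
    show False using assms(2) c l r by simp
  qed
qed

lemma card_ce:
  assumes "distinct c" "3 \<le> length c"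
  shows "card (ce c) = length c"
proof -
  have "c \<noteq> []" using assms by auto
  then show ?thesis using ce_ne[of c] closing_notin_pe[OF assms] card_pe[OF assms(1)] assms(2)
    by (simp add: finite_pe)
qed

lemma ce_rotate1: "ce (rotate1 c) = ce c"
proof (cases c)
  case Nil then show ?thesis by simp
next
  case (Cons x xs)
  show ?thesis
  proof (cases "xs = []")
    case True then show ?thesis using Cons by simp
  next
    case False
    have "ce (rotate1 c) = ce (xs @ [x])" using Cons by simp
    also have "\<dots> = insert {x, hd xs} (insert {last xs, x} (pe xs))"
      using False by (simp add: ce_ne pe_snoc)
    also have "\<dots> = ce c" using Cons False by (auto simp: ce_ne pe_Cons)
    finally show ?thesis .
  qed
qed

lemma ce_rotate: "ce (rotate n c) = ce c"
  by (induction n) (auto simp: ce_rotate1)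

lemma ce_swap: "ce (l @ q) = ce (q @ l)"
  using ce_rotate[of "length l" "l @ q"] by (simp add: rotate_append)

lemma rot_last:
  assumes "v \<in> set c"
  shows "\<exists>xs. ce (xs @ [v]) = ce c \<and> set (xs @ [v]) = set c \<and> length (xs @ [v]) = length c
    \<and> (distinct c \<longrightarrow> distinct (xs @ [v]))"
proof -
  obtain l r where c: "c = l @ v # r" using split_list[OF assms] by blast
  have "ce ((r @ l) @ [v]) = ce c" using ce_swap[of "l @ [v]" r] c by simp
  then show ?thesis using c by (intro exI[of _ "r @ l"]) auto
qed

lemma rot_edge:
  assumes "e \<in> ce d" "d \<noteq> []"
  shows "\<exists>d'. ce d' = ce d \<and> set d' = set d \<and> length d' = length d
    \<and> (distinct d \<longrightarrow> distinct d') \<and> d' \<noteq> [] \<and> e = {last d', hd d'}"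
proof (cases "e = {last d, hd d}")
  case True then show ?thesis using assms by blast
next
  case False
  then have "e \<in> pe d" using assms ce_ne by auto
  then obtain l x y r where d: "d = l @ x # y # r" and e: "e = {x,y}" using pe_split by blast
  let ?d = "(y # r) @ (l @ [x])"
  have "ce ?d = ce d" using ce_swap[of "l @ [x]" "y # r"] d by simp
  moreover have "e = {last ?d, hd ?d}" using e by auto
  ultimately show ?thesis using d by (intro exI[of _ ?d]) auto
qed



definition cyc :: "'a set set \<Rightarrow> 'a list \<Rightarrow> bool" where
  "cyc E c \<longleftrightarrow> 3 \<le> length c \<and> distinct c \<and> ce c \<subseteq> E"

definition wt :: "('a set \<Rightarrow> nat) \<Rightarrow> 'a list \<Rightarrow> nat" where
  "wt w c = sum w (ce c)"

definition mx :: "'a set set \<Rightarrow> ('a set \<Rightarrow> nat) \<Rightarrow> 'a list \<Rightarrow> bool" where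
  "mx E w c \<longleftrightarrow> cyc E c \<and> (\<forall>d. cyc E d \<longrightarrow> wt w d \<le> wt w c)"

lemma pe_nth: "pe xs = {{xs!i, xs!(Suc i)} | i. Suc i < length xs}"
proof (induction xs rule: pe.induct)
  case (1 x y zs)
  have "pe (x#y#zs) = insert {x,y} {{(y#zs)!i, (y#zs)!(Suc i)} | i. Suc i < length (y#zs)}"
    using 1 by simp
  also have "\<dots> = {{(x#y#zs)!i, (x#y#zs)!(Suc i)} | i. Suc i < length (x#y#zs)}"
  proof (rule set_eqI, rule iffI)
    fix e assume "e \<in> insert {x,y} {{(y#zs)!i, (y#zs)!(Suc i)} | i. Suc i < length (y#zs)}"
    then show "e \<in> {{(x#y#zs)!i, (x#y#zs)!(Suc i)} | i. Suc i < length (x#y#zs)}"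
    proof
      assume "e = {x,y}" then show ?thesis by (intro CollectI exI[of _ 0]) auto
    next
      assume "e \<in> {{(y#zs)!i, (y#zs)!(Suc i)} | i. Suc i < length (y#zs)}"
      then obtain i where "e = {(y#zs)!i, (y#zs)!(Suc i)}" "Suc i < length (y#zs)" by blast
      then show ?thesis by (intro CollectI exI[of _ "Suc i"]) auto
    qed
  next
    fix e assume "e \<in> {{(x#y#zs)!i, (x#y#zs)!(Suc i)} | i. Suc i < length (x#y#zs)}"
    then obtain i where i: "e = {(x#y#zs)!i, (x#y#zs)!(Suc i)}" "Suc i < length (x#y#zs)" by blast
    show "e \<in> insert {x,y} {{(y#zs)!i, (y#zs)!(Suc i)} | i. Suc i < length (y#zs)}"
    proof (cases i)
      case 0 then show ?thesis using i by simp
    next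
      case (Suc j) then show ?thesis using i by auto
    qed
  qed
  finally show ?case .
qed auto

lemma ce_nth:
  assumes "c \<noteq> []"
  shows "ce c = {{c!i, c!((Suc i) mod length c)} | i. i < length c}"
proof -
  have "ce c = {{(c@[hd c])!i, (c@[hd c])!(Suc i)} | i. Suc i < length (c@[hd c])}"
    by (simp add: ce_def pe_nth)
  also have "\<dots> = {{c!i, c!((Suc i) mod length c)} | i. i < length c}"
  proof -
    have "\<And>i. i < length c \<Longrightarrow> (c@[hd c])!i = c!i \<and> (c@[hd c])!(Suc i) = c!((Suc i) mod length c)"
    proof -
      fix i assume i: "i < length c"
      show "(c@[hd c])!i = c!i \<and> (c@[hd c])!(Suc i) = c!((Suc i) mod length c)"
      proof (cases "Suc i < length c")
        case True then show ?thesis using i by (simp add: nth_append)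
      next
        case False
        then have "Suc i = length c" using i by simp
        then show ?thesis using i assms by (simp add: nth_append hd_conv_nth)
      qed
    qed
    then have H: "\<And>i. i \<in> {..<length c} \<Longrightarrow> {(c@[hd c])!i, (c@[hd c])!(Suc i)} = {c!i, c!((Suc i) mod length c)}"
      by simp
    have e1: "{{(c@[hd c])!i, (c@[hd c])!(Suc i)} | i. Suc i < length (c@[hd c])}
        = (\<lambda>i. {(c@[hd c])!i, (c@[hd c])!(Suc i)}) ` {..<length c}" by auto
    have e2: "{{c!i, c!((Suc i) mod length c)} | i. i < length c}
        = (\<lambda>i. {c!i, c!((Suc i) mod length c)}) ` {..<length c}" by auto
    show ?thesis unfolding e1 e2 using H by (rule image_cong[OF refl])

  qed
  finally show ?thesis .
qed

lemma cyc_iff: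
  assumes "graph V E"
  shows "is_cycle V E c \<longleftrightarrow> cyc E c"
proof
  assume h: "is_cycle V E c"
  then have ne: "c \<noteq> []" by (auto simp: is_cycle_def)
  have "ce c \<subseteq> E" using h by (auto simp: is_cycle_def ce_nth[OF ne])
  then show "cyc E c" using h by (simp add: is_cycle_def cyc_def)
next
  assume h: "cyc E c"
  then have ne: "c \<noteq> []" by (auto simp: cyc_def)
  have "2 \<le> length c" using h by (simp add: cyc_def)
  then have "set c \<subseteq> \<Union>(ce c)" by (rule set_sub_ce)
  also have "\<dots> \<subseteq> \<Union>E" using h by (auto simp: cyc_def)
  also have "\<Union>E \<subseteq> V" using assms by (fastforce simp: graph_def)
  finally have sv: "set c \<subseteq> V" .
  have "\<forall>i<length c. {c!i, c!((i+1) mod length c)} \<in> E"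
    using h by (auto simp: cyc_def ce_nth[OF ne])
  then show "is_cycle V E c" using h sv by (simp add: is_cycle_def cyc_def)
qed

lemma wt_one: "cyc E c \<Longrightarrow> wt (\<lambda>_. 1) c = length c"
  by (simp add: wt_def cyc_def card_ce)

lemma cyc_set_sub: "cyc E c \<Longrightarrow> set c \<subseteq> \<Union>E"
  using set_sub_ce[of c] by (auto simp: cyc_def)

lemma finite_cyc:
  assumes "finite (\<Union>E)"
  shows "finite {c. cyc E c}"
proof -
  have "{c. cyc E c} \<subseteq> {xs. set xs \<subseteq> \<Union>E \<and> length xs \<le> card (\<Union>E)}"
  proof
    fix c assume "c \<in> {c. cyc E c}"
    then have h: "cyc E c" by simp
    then have "set c \<subseteq> \<Union>E" by (rule cyc_set_sub)
    moreover have "length c \<le> card (\<Union>E)"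
      using h distinct_card[of c] card_mono[OF assms calculation] by (simp add: cyc_def)
    ultimately show "c \<in> {xs. set xs \<subseteq> \<Union>E \<and> length xs \<le> card (\<Union>E)}" by simp
  qed
  then show ?thesis using finite_lists_length_le[OF assms] finite_subset by blast
qed

lemma ex_mx:
  assumes "finite (\<Union>E)" "cyc E c0"
  shows "\<exists>c. mx E w c"
proof -
  let ?S = "{c. cyc E c}"
  have f: "finite (wt w ` ?S)" using finite_cyc[OF assms(1)] by simp
  have ne: "wt w ` ?S \<noteq> {}" using assms(2) by auto
  obtain c where c: "c \<in> ?S" "wt w c = Max (wt w ` ?S)" using Max_in[OF f ne] by auto
  have "\<forall>d. cyc E d \<longrightarrow> wt w d \<le> wt w c" using c f by simp
  then show ?thesis using c by (auto simp: mx_def)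
qed

lemma mx_eq: "mx E w c \<Longrightarrow> mx E w d \<Longrightarrow> wt w c = wt w d"
  by (auto simp: mx_def intro: antisym)



locale red =
  fixes E :: "'a set set" and w :: "'a set \<Rightarrow> nat" and v a b :: 'a
  assumes ab: "a \<noteq> b" and av: "a \<noteq> v" and bv: "b \<noteq> v"
    and eva: "{v,a} \<in> E" and evb: "{v,b} \<in> E"
    and nbr: "\<And>z. {v,z} \<in> E \<Longrightarrow> z = a \<or> z = b"
begin

definition E' :: "'a set set" where "E' = insert {a,b} {e\<in>E. v \<notin> e}"
definition mu :: nat where
  "mu = (if {a,b} \<in> E then max (w {a,b}) (w {v,a} + w {v,b}) else w {v,a} + w {v,b})"
definition w' :: "'a set \<Rightarrow> nat" where "w' = w({a,b} := mu)"

lemma vE': "e \<in> E' \<Longrightarrow> v \<notin> e"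
  using av bv by (auto simp: E'_def)

lemma down_nov: "cyc E c \<Longrightarrow> v \<notin> set c \<Longrightarrow> cyc E' c"
  using ce_sub by (fastforce simp: cyc_def E'_def)

lemma up_set: "cyc E' d \<Longrightarrow> v \<notin> set d"
proof
  assume h: "cyc E' d" "v \<in> set d"
  have "2 \<le> length d" using h by (simp add: cyc_def)
  then have "set d \<subseteq> \<Union>(ce d)" by (rule set_sub_ce)
  then obtain e where "e \<in> ce d" "v \<in> e" using h by auto
  then show False using h vE' by (auto simp: cyc_def)
qed

lemma up_plain: "cyc E' d \<Longrightarrow> {a,b} \<notin> ce d \<or> {a,b} \<in> E \<Longrightarrow> cyc E d"
  by (auto simp: cyc_def E'_def)

lemma edge_nbr: "{v,z} \<in> E \<Longrightarrow> z = a \<or> z = b" by (rule nbr)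

lemma down_v:
  assumes c: "cyc E c" and vc: "v \<in> set c" and len: "4 \<le> length c"
  shows "\<exists>d P. cyc E' d \<and> set d = set c - {v} \<and> ce d = insert {a,b} P \<and> {a,b} \<notin> P
    \<and> ce c = insert {v,a} (insert {v,b} P) \<and> (\<forall>e\<in>P. v \<notin> e) \<and> P \<subseteq> E"
proof -
  obtain xs where x: "ce (xs @ [v]) = ce c" "set (xs @ [v]) = set c" "length (xs @ [v]) = length c"
    "distinct (xs @ [v])" using rot_last[OF vc] c by (auto simp: cyc_def)
  have ne: "xs \<noteq> []" and lx: "3 \<le> length xs" using x(3) len by auto
  have dx: "distinct xs" "v \<notin> set xs" using x(4) by auto
  have cex: "ce c = insert {v, hd xs} (insert {last xs, v} (pe xs))"
    using x(1)[symmetric] ne by (simp add: ce_ne pe_snoc)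
  have "ce c \<subseteq> E" using c by (simp add: cyc_def)
  then have h1: "{v, hd xs} \<in> E" and h2: "{v, last xs} \<in> E" using cex by (auto simp: insert_commute)
  have hl: "hd xs \<noteq> last xs"
    using dx(1) lx ne by (simp add: hd_conv_nth last_conv_nth nth_eq_iff_index_eq)
  have hab: "hd xs = a \<or> hd xs = b" "last xs = a \<or> last xs = b"
    using nbr[OF h1] nbr[OF h2] by auto
  have cl: "{last xs, hd xs} = {a,b}" using hab hl by auto
  let ?P = "pe xs"
  have P1: "ce xs = insert {a,b} ?P" using ce_ne[OF ne] cl by simp
  have P2: "{a,b} \<notin> ?P" using closing_notin_pe[OF dx(1) lx] cl by simp
  have P3: "ce c = insert {v,a} (insert {v,b} ?P)" using cex hab hl by (auto simp: insert_commute)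
  have P4: "\<forall>e\<in>?P. v \<notin> e" using pe_sub dx(2) by blast
  have P5: "?P \<subseteq> E" using \<open>ce c \<subseteq> E\<close> P3 by auto
  have "cyc E' xs" using lx dx(1) P1 P4 P5 by (auto simp: cyc_def E'_def)
  moreover have "set xs = set c - {v}" using x(2) dx(2) by auto
  ultimately show ?thesis using P1 P2 P3 P4 P5 by blast
qed

lemma tri:
  assumes c: "cyc E c" and vc: "v \<in> set c" and len: "length c = 3"
  shows "{a,b} \<in> E \<and> ce c = {{v,a},{v,b},{a,b}} \<and> set c = {v,a,b}"
proof -
  obtain xs where x: "ce (xs @ [v]) = ce c" "set (xs @ [v]) = set c" "length (xs @ [v]) = length c"
    "distinct (xs @ [v])" using rot_last[OF vc] c by (auto simp: cyc_def)
  then obtain x y where xs: "xs = [x,y]" using len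
  proof -
    have "length xs = 2" using x(3) len by simp
    then show ?thesis using that by (auto simp: numeral_2_eq_2 length_Suc_conv)
  qed
  have "ce c = ce [x,y,v]" using x(1) xs by simp
  also have "\<dots> = {{v,x},{y,v},{x,y}}" by (simp add: ce_def insert_commute)
  finally have cex: "ce c = {{v,x},{y,v},{x,y}}" .
  have "ce c \<subseteq> E" using c by (simp add: cyc_def)
  then have "{v,x} \<in> E" "{v,y} \<in> E" "{x,y} \<in> E" using cex by (auto simp: insert_commute)
  moreover have "x \<noteq> y" "x \<noteq> v" "y \<noteq> v" using x(4) xs by auto
  ultimately have "(x = a \<and> y = b) \<or> (x = b \<and> y = a)"
    using nbr[of x] nbr[of y] by blast
  then show ?thesis
  proof
    assume "x = a \<and> y = b"
    then show ?thesis using cex x(2) xs \<open>{x,y} \<in> E\<close> by (simp add: insert_commute)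
  next
    assume "x = b \<and> y = a"
    then show ?thesis using cex x(2) xs \<open>{x,y} \<in> E\<close> by (auto simp: insert_commute)
  qed
qed

lemma up_v:
  assumes d: "cyc E' d" and ed: "{a,b} \<in> ce d"
  shows "\<exists>c P. cyc E c \<and> set c = insert v (set d) \<and> ce d = insert {a,b} P \<and> {a,b} \<notin> P
    \<and> ce c = insert {v,a} (insert {v,b} P) \<and> (\<forall>e\<in>P. v \<notin> e)"
proof -
  have ne: "d \<noteq> []" using d by (auto simp: cyc_def)
  obtain d' where x: "ce d' = ce d" "set d' = set d" "length d' = length d" "distinct d'" "d' \<noteq> []"
    "{a,b} = {last d', hd d'}" using rot_edge[OF ed ne] d by (auto simp: cyc_def)
  have vd: "v \<notin> set d'" using up_set[OF d] x(2) by simp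
  have l3: "3 \<le> length d'" using d x(3) by (simp add: cyc_def)
  let ?P = "pe d'"
  have P1: "ce d = insert {a,b} ?P" using ce_ne[OF x(5)] x(1) x(6) by simp
  have P2: "{a,b} \<notin> ?P" using closing_notin_pe[OF x(4) l3] x(6) by simp
  let ?c = "d' @ [v]"
  have cec: "ce ?c = insert {v, hd d'} (insert {last d', v} ?P)"
    using x(5) by (simp add: ce_ne pe_snoc)
  have P3: "ce ?c = insert {v,a} (insert {v,b} ?P)"
    using cec x(6) by (auto simp: doubleton_eq_iff insert_commute)
  have P4: "\<forall>e\<in>?P. v \<notin> e" using pe_sub vd by blast
  have "?P \<subseteq> E'" using d P1 by (auto simp: cyc_def)
  then have "?P \<subseteq> E" using P2 by (auto simp: E'_def)
  then have "ce ?c \<subseteq> E" using P3 eva evb by auto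
  then have "cyc E ?c" using l3 x(4) vd by (simp add: cyc_def)
  moreover have "set ?c = insert v (set d)" using x(2) by simp
  ultimately show ?thesis using P1 P2 P3 P4 by blast
qed

end


definition INV :: "'a set set \<Rightarrow> ('a set \<Rightarrow> nat) \<Rightarrow> bool" where
  "INV E w \<longleftrightarrow> (\<exists>c. cyc E c) \<and> (\<exists>x. \<forall>c. mx E w c \<longrightarrow> x \<in> set c)
    \<and> (\<forall>e\<in>E. \<forall>c d. mx E w c \<longrightarrow> mx E w d \<longrightarrow> wt w c \<le> 2 * w e \<longrightarrow> e \<subseteq> set d)
    \<and> (\<forall>e\<in>E. \<forall>c d. mx E w c \<longrightarrow> mx E w d \<longrightarrow> wt w c < 2 * w e \<longrightarrow> e \<in> ce d)
    \<and> (\<forall>e\<in>E. \<forall>f\<in>E. e \<noteq> f \<longrightarrow> (\<forall>c. mx E w c \<longrightarrow> w e + w f < wt w c))"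

locale red2 = red +
  assumes pos: "\<And>e. e \<in> E \<Longrightarrow> 0 < w e"
    and fin: "finite (\<Union>E)"
    and edges: "\<And>e. e \<in> E \<Longrightarrow> \<exists>x y. x \<noteq> y \<and> e = {x,y}"
begin

abbreviation "al \<equiv> w {v,a}"
abbreviation "be \<equiv> w {v,b}"
abbreviation "ga \<equiv> w {a,b}"

lemma al_pos: "0 < al" using pos eva by simp
lemma be_pos: "0 < be" using pos evb by simp

lemma mu_ge: "al + be \<le> mu" "{a,b} \<in> E \<Longrightarrow> ga \<le> mu"
  "{a,b} \<in> E \<Longrightarrow> mu = ga \<or> mu = al + be" "{a,b} \<notin> E \<Longrightarrow> mu = al + be"
  by (auto simp: mu_def)

lemma vedge: "e \<in> E \<Longrightarrow> v \<in> e \<Longrightarrow> e = {v,a} \<or> e = {v,b}"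
proof -
  assume e: "e \<in> E" "v \<in> e"
  obtain x y where xy: "x \<noteq> y" "e = {x,y}" using edges[OF e(1)] by blast
  show ?thesis
  proof (cases "x = v")
    case True
    then have "{v,y} \<in> E" using e xy by simp
    then show ?thesis using nbr[of y] True xy by auto
  next
    case False
    then have "y = v" using e xy by auto
    then have "{v,x} \<in> E" using e xy by (simp add: insert_commute)
    then show ?thesis using nbr[of x] \<open>y = v\<close> xy by (auto simp: insert_commute)
  qed
qed

lemma w'_eq: "e \<noteq> {a,b} \<Longrightarrow> w' e = w e" by (simp add: w'_def)
lemma w'_ab: "w' {a,b} = mu" by (simp add: w'_def)

lemma va_ne: "{v,a} \<noteq> {v,b}" using ab by (auto simp: doubleton_eq_iff)
lemma va_ab: "{v,a} \<noteq> {a,b}" using ab bv av by (auto simp: doubleton_eq_iff)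
lemma vb_ab: "{v,b} \<noteq> {a,b}" using ab bv av by (auto simp: doubleton_eq_iff)

lemma wsum_v:
  assumes "ce c = insert {v,a} (insert {v,b} P)" "\<forall>e\<in>P. v \<notin> e"
  shows "wt w c = al + be + sum w P"
proof -
  have f: "finite P" using assms(1) finite_ce[of c] by (metis finite_insert)
  have "{v,a} \<notin> P" "{v,b} \<notin> P" using assms(2) by auto
  then show ?thesis using assms(1) f va_ne by (simp add: wt_def)
qed

lemma wsum_ab:
  assumes "ce d = insert {a,b} P" "{a,b} \<notin> P"
  shows "wt w' d = mu + sum w P"
proof -
  have f: "finite P" using assms(1) finite_ce[of d] by (metis finite_insert)
  have "sum w' P = sum w P" using assms(2) by (intro sum.cong refl) (metis w'_eq)
  then show ?thesis using assms f by (simp add: wt_def w'_ab)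
qed

lemma w_nov1: "{a,b} \<notin> ce c \<Longrightarrow> wt w' c = wt w c"
  unfolding wt_def by (intro sum.cong refl) (metis w'_eq)

lemma w_nov2:
  assumes "{a,b} \<in> ce c"
  shows "wt w' c + ga = wt w c + mu"
proof -
  have f: "finite (ce c)" by (rule finite_ce)
  have "wt w' c = w' {a,b} + sum w' (ce c - {{a,b}})" unfolding wt_def using sum.remove[OF f assms] .
  moreover have "wt w c = w {a,b} + sum w (ce c - {{a,b}})" unfolding wt_def using sum.remove[OF f assms] .
  moreover have "sum w' (ce c - {{a,b}}) = sum w (ce c - {{a,b}})" by (intro sum.cong refl) (metis DiffD2 singletonI w'_eq)
  ultimately show ?thesis by (simp add: w'_ab)
qed

lemma lift:
  assumes d: "cyc E' d"
  shows "\<exists>c. cyc E c \<and> wt w c = wt w' d"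
proof (cases "{a,b} \<in> ce d")
  case False
  then have "cyc E d" using up_plain[OF d] by simp
  then show ?thesis using w_nov1[OF False] by (intro exI[of _ d]) simp
next
  case True
  show ?thesis
  proof (cases "{a,b} \<in> E \<and> mu = ga")
    case True
    then have "cyc E d" using up_plain[OF d] by simp
    moreover have "wt w d = wt w' d" using w_nov2[OF \<open>{a,b} \<in> ce d\<close>] True by simp
    ultimately show ?thesis by blast
  next
    case False
    then have m: "mu = al + be" using mu_ge by blast
    obtain c P where cP: "cyc E c" "ce d = insert {a,b} P" "{a,b} \<notin> P"
      "ce c = insert {v,a} (insert {v,b} P)" "\<forall>e\<in>P. v \<notin> e" using up_v[OF d True] by (elim exE conjE) (rule that; assumption)
    have "wt w c = wt w' d" using wsum_v[OF cP(4,5)] wsum_ab[OF cP(2,3)] m by simp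
    then show ?thesis using cP(1) by blast
  qed
qed

lemma lift_le: "cyc E' d \<Longrightarrow> mx E w c \<Longrightarrow> wt w' d \<le> wt w c"
  using lift unfolding mx_def by fastforce

lemma mx_nov:
  assumes c: "mx E w c" and vc: "v \<notin> set c"
  shows "mx E' w' c \<and> wt w' c = wt w c \<and> ({a,b} \<in> ce c \<longrightarrow> mu = ga)"
proof -
  have cc: "cyc E c" using c by (simp add: mx_def)
  have c': "cyc E' c" using down_nov[OF cc vc] .
  have le1: "wt w c \<le> wt w' c"
  proof (cases "{a,b} \<in> ce c")
    case True
    then have "{a,b} \<in> E" using cc by (auto simp: cyc_def)
    then show ?thesis using w_nov2[OF True] mu_ge(2) by simp
  next
    case False then show ?thesis using w_nov1 by simp
  qed
  have le2: "wt w' c \<le> wt w c" using lift_le[OF c' c] .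
  have "mx E' w' c" using c' le1 lift_le[OF _ c] by (auto simp: mx_def intro: order_trans)
  moreover have "{a,b} \<in> ce c \<longrightarrow> mu = ga" using w_nov2 le1 le2 by fastforce
  ultimately show ?thesis using le1 le2 by simp
qed

lemma mx_v:
  assumes c: "mx E w c" and vc: "v \<in> set c" and len: "4 \<le> length c"
  shows "\<exists>d. mx E' w' d \<and> wt w' d = wt w c \<and> set d \<subseteq> set c \<and> {v,a} \<in> ce c \<and> {v,b} \<in> ce c
    \<and> (\<forall>e\<in>ce d. e \<noteq> {a,b} \<longrightarrow> e \<in> ce c) \<and> mu = al + be"
proof -
  have cc: "cyc E c" using c by (simp add: mx_def)
  obtain d P where dP: "cyc E' d" "set d = set c - {v}" "ce d = insert {a,b} P" "{a,b} \<notin> P"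
    "ce c = insert {v,a} (insert {v,b} P)" "\<forall>e\<in>P. v \<notin> e" "P \<subseteq> E"
    using down_v[OF cc vc len] by (elim exE conjE) (rule that; assumption)
  have eq: "wt w' d + al + be = wt w c + mu" using wsum_v[OF dP(5,6)] wsum_ab[OF dP(3,4)] by simp
  have le1: "wt w c \<le> wt w' d" using eq mu_ge(1) by simp
  have le2: "wt w' d \<le> wt w c" using lift_le[OF dP(1) c] .
  have "mx E' w' d" using dP(1) le1 lift_le[OF _ c] by (auto simp: mx_def intro: order_trans)
  moreover have "mu = al + be" using eq le1 le2 by simp
  ultimately show ?thesis using le1 le2 dP by auto
qed

lemma T_cyc:
  assumes "{a,b} \<in> E"
  shows "cyc E [v,a,b] \<and> wt w [v,a,b] = al + be + ga"
proof -
  have ce: "ce [v,a,b] = {{v,a},{a,b},{v,b}}" by (auto simp: ce_def insert_commute)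
  have "cyc E [v,a,b]" using ce assms eva evb av bv ab by (simp add: cyc_def)
  moreover have "wt w [v,a,b] = al + be + ga" using ce va_ne va_ab vb_ab by (simp add: wt_def)
  ultimately show ?thesis by simp
qed

end


context red2 begin

lemma triT:
  assumes "cyc E c" "v \<in> set c" "length c = 3"
  shows "{a,b} \<in> E \<and> ce c = {{v,a},{v,b},{a,b}} \<and> set c = {v,a,b} \<and> wt w c = al + be + ga"
proof -
  have t: "{a,b} \<in> E" "ce c = {{v,a},{v,b},{a,b}}" "set c = {v,a,b}" using tri[OF assms] by auto
  have "wt w c = al + be + ga" using t(2) va_ne va_ab vb_ab by (simp add: wt_def)
  then show ?thesis using t by simp
qed

lemma e_cases:
  assumes "e \<in> E"
  shows "e = {v,a} \<or> e = {v,b} \<or> e = {a,b} \<or> (e \<in> E' \<and> e \<noteq> {a,b} \<and> v \<notin> e \<and> w' e = w e)"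
proof (cases "v \<in> e")
  case True then show ?thesis using vedge[OF assms] by blast
next
  case False then show ?thesis using assms w'_eq by (auto simp: E'_def)
qed

lemma finE': "finite (\<Union>E')"
proof -
  have "\<Union>E' \<subseteq> insert a (insert b (\<Union>E))" by (auto simp: E'_def)
  then show ?thesis using fin finite_subset by blast
qed

lemma abE': "{a,b} \<in> E'" by (simp add: E'_def)

lemma INV_D:
  assumes "INV F u"
  shows "\<exists>c. cyc F c" "\<exists>x. \<forall>c. mx F u c \<longrightarrow> x \<in> set c"
    "\<And>e c d. e \<in> F \<Longrightarrow> mx F u c \<Longrightarrow> mx F u d \<Longrightarrow> wt u c \<le> 2 * u e \<Longrightarrow> e \<subseteq> set d"
    "\<And>e c d. e \<in> F \<Longrightarrow> mx F u c \<Longrightarrow> mx F u d \<Longrightarrow> wt u c < 2 * u e \<Longrightarrow> e \<in> ce d"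
    "\<And>e f c. e \<in> F \<Longrightarrow> f \<in> F \<Longrightarrow> e \<noteq> f \<Longrightarrow> mx F u c \<Longrightarrow> u e + u f < wt u c"
  using assms unfolding INV_def by simp_all

end

locale red3 = red2 +
  assumes I: "INV E' w'"
begin

lemma c0: "\<exists>c. cyc E' c" using INV_D(1)[OF I] .
lemma I1: "\<exists>x. \<forall>c. mx E' w' c \<longrightarrow> x \<in> set c" using INV_D(2)[OF I] .
lemmas I2 = INV_D(3)[OF I] and I3 = INV_D(4)[OF I] and I4 = INV_D(5)[OF I]

definition d0 where "d0 = (SOME d. mx E' w' d)"
lemma d0: "mx E' w' d0"
proof -
  obtain c where "cyc E' c" using c0 by blast
  then have "\<exists>d. mx E' w' d" using ex_mx[OF finE'] by blast
  then show ?thesis unfolding d0_def by (rule someI_ex)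
qed

lemma Mle: "mx E w c \<Longrightarrow> wt w' d0 \<le> wt w c"
  using lift_le d0 by (simp add: mx_def)

lemma len4: "cyc E c \<Longrightarrow> length c \<noteq> 3 \<Longrightarrow> 4 \<le> length c"
  by (auto simp: cyc_def)

lemma heavy_other: "\<And>e c. e \<in> E' \<Longrightarrow> e \<noteq> {a,b} \<Longrightarrow> mx E w c \<Longrightarrow> wt w c = al + be + ga
    \<Longrightarrow> wt w c \<le> 2 * w' e \<Longrightarrow> {a,b} \<in> E \<Longrightarrow> False"
proof -
  fix e c assume h: "e \<in> E'" "e \<noteq> {a,b}" "mx E w c" "wt w c = al + be + ga"
    "wt w c \<le> 2 * w' e" "{a,b} \<in> E"
  have "w' e + w' {a,b} < wt w' d0" using I4[OF h(1) abE' h(2) d0] .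
  then have "w' e + mu < al + be + ga" using Mle[OF h(3)] h(4) w'_ab by simp
  then show False using mu_ge(1) mu_ge(2)[OF h(6)] h(4,5) by linarith
qed

lemma heavy_v: "\<And>k d. k < al + be \<Longrightarrow> mx E w d \<Longrightarrow> v \<notin> set d \<Longrightarrow> wt w d \<le> 2 * k \<Longrightarrow> False"
proof -
  fix k d assume h: "k < al + be" "mx E w d" "v \<notin> set d" "wt w d \<le> 2 * k"
  have m: "mx E' w' d" "wt w' d = wt w d" "{a,b} \<in> ce d \<longrightarrow> mu = ga" using mx_nov[OF h(2,3)] by auto
  have "wt w' d < 2 * w' {a,b}" using h(1,4) m(2) mu_ge(1) w'_ab by simp
  then have abd: "{a,b} \<in> ce d" using I3[OF abE' m(1) m(1)] by simp
  then have mg: "mu = ga" using m(3) by simp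
  have abE: "{a,b} \<in> E" using abd h(2) by (auto simp: mx_def cyc_def)
  have "wt w [v,a,b] \<le> wt w d" using T_cyc[OF abE] h(2) by (auto simp: mx_def)
  then show False using T_cyc[OF abE] mg mu_ge(1) h(1,4) by linarith
qed

lemma P1: "\<exists>x. \<forall>c. mx E w c \<longrightarrow> x \<in> set c"
proof (cases "\<exists>T. mx E w T \<and> v \<in> set T \<and> length T = 3")
  case True
  then obtain T where T: "mx E w T" "v \<in> set T" "length T = 3" by blast
  have tT: "{a,b} \<in> E" "wt w T = al + be + ga" using triT[OF _ T(2,3)] T(1) by (auto simp: mx_def)
  have "\<forall>c. mx E w c \<longrightarrow> a \<in> set c"
  proof (intro allI impI)
    fix c assume c: "mx E w c"
    then have cc: "cyc E c" by (simp add: mx_def)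
    show "a \<in> set c"
    proof (cases "v \<in> set c")
      case True
      show ?thesis
      proof (cases "length c = 3")
        case True then show ?thesis using triT[OF cc \<open>v \<in> set c\<close>] by simp
      next
        case False
        then have "{v,a} \<in> ce c" using mx_v[OF c \<open>v \<in> set c\<close> len4[OF cc False]] by blast
        then show ?thesis using ce_sub by blast
      qed
    next
      case False
      have m: "mx E' w' c" "wt w' c = wt w c" using mx_nov[OF c False] by auto
      have "wt w c = wt w T" using mx_eq[OF c T(1)] .
      then have "wt w' c \<le> 2 * w' {a,b}" using m(2) tT mu_ge(1) mu_ge(2)[OF tT(1)] w'_ab by simp
      then have "{a,b} \<subseteq> set c" using I2[OF abE' m(1) m(1)] by simp
      then show ?thesis by simp
    qed
  qed
  then show ?thesis by blast
next
  case False
  obtain x where x: "\<forall>c. mx E' w' c \<longrightarrow> x \<in> set c" using I1 by blast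
  have "\<forall>c. mx E w c \<longrightarrow> x \<in> set c"
  proof (intro allI impI)
    fix c assume c: "mx E w c"
    then have cc: "cyc E c" by (simp add: mx_def)
    show "x \<in> set c"
    proof (cases "v \<in> set c")
      case True
      then have "length c \<noteq> 3" using False c by blast
      then obtain d where "mx E' w' d" "set d \<subseteq> set c"
        using mx_v[OF c True len4[OF cc]] by blast
      then show ?thesis using x by blast
    next
      case False
      then show ?thesis using mx_nov[OF c False] x by blast
    qed
  qed
  then show ?thesis by blast
qed

lemma P2: "\<And>e c d. e \<in> E \<Longrightarrow> mx E w c \<Longrightarrow> mx E w d \<Longrightarrow> wt w c \<le> 2 * w e \<Longrightarrow> e \<subseteq> set d"
proof -
  fix e c d assume h: "e \<in> E" "mx E w c" "mx E w d" "wt w c \<le> 2 * w e"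
  have dd: "cyc E d" using h(3) by (simp add: mx_def)
  have wd: "wt w d \<le> 2 * w e" using h(4) mx_eq[OF h(2,3)] by simp
  have ec: "e = {v,a} \<or> e = {v,b} \<or> e = {a,b} \<or> (e \<in> E' \<and> e \<noteq> {a,b} \<and> v \<notin> e \<and> w' e = w e)"
    using e_cases[OF h(1)] .
  show "e \<subseteq> set d"
  proof (cases "v \<in> set d")
    case True
    show ?thesis
    proof (cases "length d = 3")
      case True
      have t: "{a,b} \<in> E" "set d = {v,a,b}" "wt w d = al + be + ga"
        using triT[OF dd \<open>v \<in> set d\<close> True] by auto
      show ?thesis
        using ec
      proof (elim disjE conjE)
        assume e: "e \<in> E'" "e \<noteq> {a,b}" "v \<notin> e" "w' e = w e"
        show ?thesis using heavy_other[OF e(1,2) h(3) t(3) _ t(1)] wd e(4) by simp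
      qed (auto simp: t(2))
    next
      case False
      obtain d' where d': "mx E' w' d'" "wt w' d' = wt w d" "set d' \<subseteq> set d" "{v,a} \<in> ce d"
        "{v,b} \<in> ce d" using mx_v[OF h(3) \<open>v \<in> set d\<close> len4[OF dd False]] by blast
      show ?thesis
        using ec
      proof (elim disjE conjE)
        assume "e = {v,a}" then show ?thesis using d'(4) ce_sub by blast
      next
        assume "e = {v,b}" then show ?thesis using d'(5) ce_sub by blast
      next
        assume e: "e = {a,b}"
        have "wt w' d' \<le> 2 * w' e" using wd d'(2) e w'_ab mu_ge(2) h(1) by simp
        then show ?thesis using I2[OF _ d'(1) d'(1)] e abE' d'(3) by blast
      next
        assume e: "e \<in> E'" "e \<noteq> {a,b}" "v \<notin> e" "w' e = w e"
        have "wt w' d' \<le> 2 * w' e" using wd d'(2) e by simp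
        then show ?thesis using I2[OF e(1) d'(1) d'(1)] d'(3) by blast
      qed
    qed
  next
    case False
    have m: "mx E' w' d" "wt w' d = wt w d" using mx_nov[OF h(3) False] by auto
    show ?thesis
      using ec
    proof (elim disjE conjE)
      assume "e = {v,a}" then show ?thesis using heavy_v[OF _ h(3) False, of al] be_pos wd by simp
    next
      assume "e = {v,b}" then show ?thesis using heavy_v[OF _ h(3) False, of be] al_pos wd by simp
    next
      assume e: "e = {a,b}"
      have "wt w' d \<le> 2 * w' e" using wd m(2) e w'_ab mu_ge(2) h(1) by simp
      then show ?thesis using I2[OF _ m(1) m(1)] e abE' by blast
    next
      assume e: "e \<in> E'" "e \<noteq> {a,b}" "v \<notin> e" "w' e = w e"
      have "wt w' d \<le> 2 * w' e" using wd m(2) e by simp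
      then show ?thesis using I2[OF e(1) m(1) m(1)] by blast
    qed
  qed
qed

lemma P3: "\<And>e c d. e \<in> E \<Longrightarrow> mx E w c \<Longrightarrow> mx E w d \<Longrightarrow> wt w c < 2 * w e \<Longrightarrow> e \<in> ce d"
proof -
  fix e c d assume h: "e \<in> E" "mx E w c" "mx E w d" "wt w c < 2 * w e"
  have dd: "cyc E d" using h(3) by (simp add: mx_def)
  have wd: "wt w d < 2 * w e" using h(4) mx_eq[OF h(2,3)] by simp
  have ec: "e = {v,a} \<or> e = {v,b} \<or> e = {a,b} \<or> (e \<in> E' \<and> e \<noteq> {a,b} \<and> v \<notin> e \<and> w' e = w e)"
    using e_cases[OF h(1)] .
  show "e \<in> ce d"
  proof (cases "v \<in> set d")
    case True
    show ?thesis
    proof (cases "length d = 3")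
      case True
      have t: "{a,b} \<in> E" "ce d = {{v,a},{v,b},{a,b}}" "wt w d = al + be + ga"
        using triT[OF dd \<open>v \<in> set d\<close> True] by auto
      show ?thesis
        using ec
      proof (elim disjE conjE)
        assume e: "e \<in> E'" "e \<noteq> {a,b}" "v \<notin> e" "w' e = w e"
        show ?thesis using heavy_other[OF e(1,2) h(3) t(3) _ t(1)] wd e(4) by simp
      qed (auto simp: t(2))
    next
      case False
      obtain d' where d': "mx E' w' d'" "wt w' d' = wt w d" "set d' \<subseteq> set d" "{v,a} \<in> ce d"
        "{v,b} \<in> ce d" "\<forall>e\<in>ce d'. e \<noteq> {a,b} \<longrightarrow> e \<in> ce d" "mu = al + be"
        using mx_v[OF h(3) \<open>v \<in> set d\<close> len4[OF dd False]] by blast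
      show ?thesis
        using ec
      proof (elim disjE conjE)
        assume "e = {v,a}" then show ?thesis using d'(4) by blast
      next
        assume "e = {v,b}" then show ?thesis using d'(5) by blast
      next
        assume e: "e = {a,b}"
        then have abE: "{a,b} \<in> E" using h(1) by simp
        have "wt w [v,a,b] \<le> wt w d" using T_cyc[OF abE] h(3) by (auto simp: mx_def)
        moreover have "wt w d < 2 * ga" using wd e by simp
        ultimately have False using T_cyc[OF abE] d'(7) mu_ge(2)[OF abE] by linarith
        then show ?thesis ..
      next
        assume e: "e \<in> E'" "e \<noteq> {a,b}" "v \<notin> e" "w' e = w e"
        have "wt w' d' < 2 * w' e" using wd d'(2) e by simp
        then have "e \<in> ce d'" using I3[OF e(1) d'(1) d'(1)] by blast
        then show ?thesis using d'(6) e(2) by blast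
      qed
    qed
  next
    case False
    have m: "mx E' w' d" "wt w' d = wt w d" using mx_nov[OF h(3) False] by auto
    show ?thesis
      using ec
    proof (elim disjE conjE)
      assume "e = {v,a}" then show ?thesis using heavy_v[OF _ h(3) False, of al] be_pos wd by simp
    next
      assume "e = {v,b}" then show ?thesis using heavy_v[OF _ h(3) False, of be] al_pos wd by simp
    next
      assume e: "e = {a,b}"
      have "wt w' d < 2 * w' e" using wd m(2) e w'_ab mu_ge(2) h(1) by simp
      then show ?thesis using I3[OF _ m(1) m(1)] e abE' by blast
    next
      assume e: "e \<in> E'" "e \<noteq> {a,b}" "v \<notin> e" "w' e = w e"
      have "wt w' d < 2 * w' e" using wd m(2) e by simp
      then show ?thesis using I3[OF e(1) m(1) m(1)] by blast
    qed
  qed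
qed

lemma P4: "\<And>e f c. e \<in> E \<Longrightarrow> f \<in> E \<Longrightarrow> e \<noteq> f \<Longrightarrow> mx E w c \<Longrightarrow> w e + w f < wt w c"
proof -
  fix e f c assume h: "e \<in> E" "f \<in> E" "e \<noteq> f" "mx E w c"
  have M: "wt w' d0 \<le> wt w c" using Mle[OF h(4)] .
  let ?S = "{{v,a},{v,b},{a,b}}"
  have wS: "\<And>g. g \<in> E \<Longrightarrow> g \<in> ?S \<Longrightarrow> w g \<le> mu" using mu_ge by auto
  have nS: "\<And>g. g \<in> E \<Longrightarrow> g \<notin> ?S \<Longrightarrow> g \<in> E' \<and> g \<noteq> {a,b} \<and> w' g = w g"
    using e_cases by blast
  show "w e + w f < wt w c"
  proof (cases "e \<in> ?S")
    case eS: True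
    show ?thesis
    proof (cases "f \<in> ?S")
      case fS: True
      show ?thesis
      proof (cases "{a,b} \<in> E")
        case True
        have "wt w [v,a,b] \<le> wt w c" using T_cyc[OF True] h(4) by (auto simp: mx_def)
        moreover have "0 < ga" using pos True by simp
        moreover have "w e + w f < al + be + ga"
        proof -
          have e3: "e = {v,a} \<or> e = {v,b} \<or> e = {a,b}" using eS by simp
          have f3: "f = {v,a} \<or> f = {v,b} \<or> f = {a,b}" using fS by simp
          show ?thesis using e3 f3 h(3) al_pos be_pos \<open>0 < ga\<close>
            by (elim disjE) simp_all
        qed
        ultimately show ?thesis using T_cyc[OF True] by linarith
      next
        case False
        have e2: "e = {v,a} \<or> e = {v,b}" using eS h(1) False by auto
        have f2: "f = {v,a} \<or> f = {v,b}" using fS h(2) False by auto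
        have ef: "w e + w f = mu" using e2 f2 h(3) mu_ge(4)[OF False] by (elim disjE) simp_all
        have "card (ce d0) = length d0" "3 \<le> length d0" using d0 card_ce by (auto simp: mx_def cyc_def)
        then have "\<not> ce d0 \<subseteq> {{a,b}}"
        proof -
          assume c3: "card (ce d0) = length d0" "3 \<le> length d0"
          show ?thesis
          proof
            assume "ce d0 \<subseteq> {{a,b}}"
            then have "card (ce d0) \<le> card {{a,b}}" by (intro card_mono) auto
            then show False using c3 by simp
          qed
        qed
        then obtain g where g: "g \<in> ce d0" "g \<noteq> {a,b}" by blast
        have gE: "g \<in> E'" using g(1) d0 by (auto simp: mx_def cyc_def)
        have "w' {a,b} + w' g < wt w' d0" using I4[OF abE' gE _ d0] g(2) by metis
        then show ?thesis using ef M w'_ab by simp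
      qed
    next
      case fS: False
      have f': "f \<in> E'" "f \<noteq> {a,b}" "w' f = w f" using nS[OF h(2) fS] by auto
      have "w' {a,b} + w' f < wt w' d0" using I4[OF abE' f'(1) _ d0] f'(2) by metis
      then show ?thesis using wS[OF h(1) eS] f'(3) M w'_ab by simp
    qed
  next
    case eS: False
    have e': "e \<in> E'" "e \<noteq> {a,b}" "w' e = w e" using nS[OF h(1) eS] by auto
    show ?thesis
    proof (cases "f \<in> ?S")
      case fS: True
      have "w' e + w' {a,b} < wt w' d0" using I4[OF e'(1) abE' e'(2) d0] .
      then show ?thesis using wS[OF h(2) fS] e'(3) M w'_ab by simp
    next
      case fS: False
      have f': "f \<in> E'" "f \<noteq> {a,b}" "w' f = w f" using nS[OF h(2) fS] by auto
      have "w' e + w' f < wt w' d0" using I4[OF e'(1) f'(1) h(3) d0] .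
      then show ?thesis using e'(3) f'(3) M by simp
    qed
  qed
qed

lemma red_INV: "INV E w"
proof -
  obtain c where "cyc E' c" using c0 by blast
  then obtain c' where "cyc E c'" using lift by blast
  then have "\<exists>c. cyc E c" by blast
  then show ?thesis unfolding INV_def using P1 P2 P3 P4 by blast
qed

end


lemma kt_edges: "k_tree k V E \<Longrightarrow> e \<in> E \<Longrightarrow> e \<subseteq> V"
proof (induction rule: k_tree.induct)
  case (base V) then show ?case by (auto simp: complete_edges_def)
next
  case (step V E C v) then show ?case by auto
qed

lemma graph_edge: "graph V E \<Longrightarrow> e \<in> E \<Longrightarrow> \<exists>x y. x \<noteq> y \<and> e = {x,y} \<and> x \<in> V \<and> y \<in> V"
  by (auto simp: graph_def)

lemma graph_sub: "graph V E \<Longrightarrow> e \<in> E \<Longrightarrow> e \<subseteq> V"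
  by (auto simp: graph_def)

lemma graph_noloop: "graph V E \<Longrightarrow> {v} \<notin> E"
  by (fastforce simp: graph_def doubleton_eq_iff)

lemma deg:
  assumes g: "graph V E" and t: "two_connected V E" and v: "v \<in> V"
  shows "\<exists>z. z \<noteq> u \<and> {v,z} \<in> E"
proof -
  have c3: "3 \<le> card V" using t by (simp add: two_connected_def)
  have fV: "finite V" using g by (simp add: graph_def)
  have "card V - card {u,v} \<le> card (V - {u,v})" by (rule diff_card_le_card_Diff) simp
  moreover have "card {u,v} \<le> 2" by (simp add: card_insert_le_m1)
  have "V - {u,v} \<noteq> {}"
  proof
    assume "V - {u,v} = {}"
    then have "card V \<le> card {u,v}" by (intro card_mono) auto
    then show False using c3 \<open>card {u,v} \<le> 2\<close> by linarith
  qed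
  then obtain y where y: "y \<in> V" "y \<noteq> u" "y \<noteq> v" by blast
  show ?thesis
  proof (cases "u \<in> V \<and> u \<noteq> v")
    case True
    have "connected_graph (V - {u}) (del_vertex_edges E u)" using t True by (simp add: two_connected_def)
    then have "(\<lambda>x y. x \<in> V - {u} \<and> y \<in> V - {u} \<and> {x, y} \<in> del_vertex_edges E u)\<^sup>*\<^sup>* v y"
      using v y True unfolding connected_graph_def by blast
    then show ?thesis
    proof (cases rule: converse_rtranclpE)
      case base then show ?thesis using y by simp
    next
      case (step z) then show ?thesis by (auto simp: del_vertex_edges_def)
    qed
  next
    case False
    have "connected_graph V E" using t by (simp add: two_connected_def)
    then have "(\<lambda>x y. x \<in> V \<and> y \<in> V \<and> {x, y} \<in> E)\<^sup>*\<^sup>* v y"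
      using v y unfolding connected_graph_def by blast
    then show ?thesis
    proof (cases rule: converse_rtranclpE)
      case base then show ?thesis using y by simp
    next
      case (step z)
      have "z \<noteq> v" using step graph_noloop[OF g, of v] by auto
      then have "z \<noteq> u" using False step by auto
      then show ?thesis using step by blast
    qed
  qed
qed

lemma conn_proj:
  assumes c: "connected_graph W F" and v: "v \<in> W" and p: "p \<in> W" "p \<noteq> v"
    and ed: "\<And>y z. y \<in> W \<Longrightarrow> z \<in> W \<Longrightarrow> {y,z} \<in> F \<Longrightarrow>
       (if y = v then p else y) = (if z = v then p else z) \<or> {if y = v then p else y, if z = v then p else z} \<in> F'"
  shows "connected_graph (W - {v}) F'"
proof -
  let ?f = "\<lambda>y. if y = v then p else y"
  let ?R = "\<lambda>x y. x \<in> W \<and> y \<in> W \<and> {x, y} \<in> F"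
  let ?R' = "\<lambda>x y. x \<in> W - {v} \<and> y \<in> W - {v} \<and> {x, y} \<in> F'"
  have fW: "\<And>y. y \<in> W \<Longrightarrow> ?f y \<in> W - {v}" using p by auto
  have key: "\<And>u u'. ?R\<^sup>*\<^sup>* u u' \<Longrightarrow> u \<in> W \<Longrightarrow> ?R'\<^sup>*\<^sup>* (?f u) (?f u')"
  proof -
    fix u u' assume "?R\<^sup>*\<^sup>* u u'" "u \<in> W"
    then show "?R'\<^sup>*\<^sup>* (?f u) (?f u')"
    proof (induction rule: rtranclp_induct)
      case base then show ?case by simp
    next
      case (step y z)
      have yz: "y \<in> W" "z \<in> W" "{y,z} \<in> F" using step(2) by auto
      show ?case
      proof (cases "?f y = ?f z")
        case True then show ?thesis using step(3)[OF step(4)] by simp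
      next
        case False
        then have "{?f y, ?f z} \<in> F'" using ed[OF yz] by blast
        then have "?R' (?f y) (?f z)" using fW yz by blast
        then show ?thesis by (rule rtranclp.rtrancl_into_rtrancl[OF step(3)[OF step(4)]])
      qed
    qed
  qed
  show ?thesis unfolding connected_graph_def
  proof (intro conjI ballI)
    show "W - {v} \<noteq> {}" using p by auto
  next
    fix u u' assume u: "u \<in> W - {v}" "u' \<in> W - {v}"
    have "?R\<^sup>*\<^sup>* u u'" using c u unfolding connected_graph_def by blast
    from key[OF this] u show "?R'\<^sup>*\<^sup>* u u'" by auto
  qed
qed

lemma two_conn_red:
  assumes g: "graph V E" and t: "two_connected V E" and v: "v \<in> V"
    and ab: "a \<noteq> b" "a \<in> V" "b \<in> V" "a \<noteq> v" "b \<noteq> v"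
    and nbr: "\<And>z. {v,z} \<in> E \<Longrightarrow> z = a \<or> z = b" and c4: "4 \<le> card V"
  shows "two_connected (V - {v}) (insert {a,b} {e\<in>E. v \<notin> e})"
proof -
  let ?E' = "insert {a,b} {e\<in>E. v \<notin> e}"
  have fV: "finite V" using g by (simp add: graph_def)
  have card: "3 \<le> card (V - {v})" using c4 v fV by simp
  have noloop: "\<And>z. {v,z} \<in> E \<Longrightarrow> z \<noteq> v" using graph_noloop[OF g] by auto
  have conn: "connected_graph (V - {v}) ?E'"
  proof (rule conn_proj[of V E v a])
    show "connected_graph V E" using t by (simp add: two_connected_def)
  next
    fix y z assume yz: "y \<in> V" "z \<in> V" "{y,z} \<in> E"
    show "(if y = v then a else y) = (if z = v then a else z) \<or>
       {if y = v then a else y, if z = v then a else z} \<in> ?E'"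
    proof (cases "y = v")
      case True
      then have "z = a \<or> z = b" "z \<noteq> v" using nbr[of z] noloop[of z] yz by auto
      then show ?thesis using True by auto
    next
      case False
      show ?thesis
      proof (cases "z = v")
        case True
        then have "{v,y} \<in> E" using yz by (simp add: insert_commute)
        then have "y = a \<or> y = b" using nbr by blast
        then show ?thesis using True False by (auto simp: insert_commute)
      next
        case False
        then show ?thesis using \<open>y \<noteq> v\<close> yz by auto
      qed
    qed
  qed (use v ab in auto)
  have del: "\<forall>x\<in>V - {v}. connected_graph (V - {v} - {x}) (del_vertex_edges ?E' x)"
  proof
    fix x assume x: "x \<in> V - {v}"
    define p where "p = (if x = a then b else a)"
    have p: "p \<in> V - {x}" "p \<noteq> v" "p \<noteq> x" "p = a \<or> p = b" using ab by (auto simp: p_def)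
    have "connected_graph (V - {x} - {v}) (del_vertex_edges ?E' x)"
    proof (rule conn_proj[of "V - {x}" "del_vertex_edges E x" v p])
      show "connected_graph (V - {x}) (del_vertex_edges E x)" using t x by (simp add: two_connected_def)
    next
      show "v \<in> V - {x}" using x v by auto
    next
      show "p \<in> V - {x}" "p \<noteq> v" using p by auto
    next
      fix y z assume yz: "y \<in> V - {x}" "z \<in> V - {x}" "{y,z} \<in> del_vertex_edges E x"
      have yzE: "{y,z} \<in> E" using yz by (simp add: del_vertex_edges_def)
      show "(if y = v then p else y) = (if z = v then p else z) \<or>
         {if y = v then p else y, if z = v then p else z} \<in> del_vertex_edges ?E' x"
      proof (cases "y = v")
        case True
        then have z: "z = a \<or> z = b" "z \<noteq> v" "z \<noteq> x" using nbr[of z] noloop[of z] yz yzE by auto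
        show ?thesis
        proof (cases "p = z")
          case True then show ?thesis using \<open>y = v\<close> z by simp
        next
          case False
          then have "{p,z} = {a,b}" using p(4) z(1) by auto
          then have "{p,z} \<in> del_vertex_edges ?E' x" using p(3) z(3)
            by (auto simp: del_vertex_edges_def)
          then show ?thesis using \<open>y = v\<close> z(2) by simp
        qed
      next
        case False
        show ?thesis
        proof (cases "z = v")
          case True
          then have "{v,y} \<in> E" using yzE by (simp add: insert_commute)
          then have y: "y = a \<or> y = b" "y \<noteq> x" using nbr yz by auto
          show ?thesis
          proof (cases "p = y")
            case True then show ?thesis using \<open>z = v\<close> False by simp
          next
            case False
            then have "{y,p} = {a,b}" using p(4) y(1) by auto
            then have "{y,p} \<in> del_vertex_edges ?E' x" using p(3) y(2)
              by (auto simp: del_vertex_edges_def)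
            then show ?thesis using \<open>z = v\<close> \<open>y \<noteq> v\<close> by simp
          qed
        next
          case False
          then have "{y,z} \<in> del_vertex_edges ?E' x" using \<open>y \<noteq> v\<close> yz yzE
            by (auto simp: del_vertex_edges_def)
          then show ?thesis using False \<open>y \<noteq> v\<close> by simp
        qed
      qed
    qed
    moreover have "V - {x} - {v} = V - {v} - {x}" by auto
    ultimately show "connected_graph (V - {v} - {x}) (del_vertex_edges ?E' x)" by simp
  qed
  show ?thesis unfolding two_connected_def using card conn del by simp
qed

lemma base3:
  assumes g: "graph V E" and t: "two_connected V E" and c3: "card V = 3" and pos: "\<forall>e\<in>E. 0 < w e"
  shows "INV E w"
proof -
  obtain x y z where V: "V = {x,y,z}" "x \<noteq> y" "y \<noteq> z" "x \<noteq> z"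
    using c3 unfolding card_3_iff by blast
  have nb: "\<And>p u. p \<in> V \<Longrightarrow> \<exists>r. r \<noteq> u \<and> r \<noteq> p \<and> r \<in> V \<and> {p,r} \<in> E"
  proof -
    fix p u assume p: "p \<in> V"
    obtain r where r: "r \<noteq> u" "{p,r} \<in> E" using deg[OF g t p] by blast
    have "r \<in> V" using graph_sub[OF g r(2)] by simp
    moreover have "r \<noteq> p" using r(2) graph_noloop[OF g, of p] by auto
    ultimately show "\<exists>r. r \<noteq> u \<and> r \<noteq> p \<and> r \<in> V \<and> {p,r} \<in> E" using r by blast
  qed
  have exy: "{x,y} \<in> E" using nb[of x z] V by auto
  have exz: "{x,z} \<in> E" using nb[of x y] V by auto
  have eyz: "{y,z} \<in> E" using nb[of y x] V by auto
  have fV0: "finite V" using g by (simp add: graph_def)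
  have "E \<subseteq> Pow V" using graph_sub[OF g] by blast
  then have fE: "finite E" using fV0 finite_subset by blast
  have fV: "finite V" using V by simp
  let ?T = "[x,y,z]"
  have ceT: "ce ?T = {{x,y},{y,z},{z,x}}" by (simp add: ce_def)
  have cT: "cyc E ?T" using V exy exz eyz ceT by (auto simp: cyc_def insert_commute)
  have cardT: "card (ce ?T) = 3" using card_ce[of ?T] V by simp
  have "ce ?T \<subseteq> E" using cT by (simp add: cyc_def)
  then have cardE: "3 \<le> card E" using cardT card_mono[OF fE] by metis
  have cycs: "\<And>c. cyc E c \<Longrightarrow> set c = V \<and> ce c = E"
  proof -
    fix c assume c: "cyc E c"
    have "set c \<subseteq> \<Union>E" using cyc_set_sub[OF c] .
    also have "\<dots> \<subseteq> V" using graph_sub[OF g] by blast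
    finally have sc: "set c \<subseteq> V" .
    have "card (set c) = length c" using c distinct_card by (auto simp: cyc_def)
    then have "card V \<le> card (set c)" using c c3 by (simp add: cyc_def)
    then have "card (set c) = card V" using card_mono[OF fV sc] by linarith
    then have scV: "set c = V" by (rule card_subset_eq[OF fV sc])
    have "length c = 3" using \<open>card (set c) = length c\<close> scV c3 by simp
    then have cc: "card (ce c) = 3" using card_ce[of c] c by (simp add: cyc_def)
    have "E \<subseteq> {{x,y},{y,z},{x,z}}"
    proof
      fix e assume "e \<in> E"
      then obtain p q where "p \<noteq> q" "e = {p,q}" "p \<in> V" "q \<in> V" using graph_edge[OF g] by blast
      then have pq: "p = x \<or> p = y \<or> p = z" "q = x \<or> q = y \<or> q = z" "p \<noteq> q" "e = {p,q}" using V by auto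
      show "e \<in> {{x,y},{y,z},{x,z}}" using pq(1,2) pq(3) unfolding pq(4)
        by (elim disjE) (simp_all add: insert_commute)
    qed
    moreover have "card {{x,y},{y,z},{x,z}} \<le> 3" by (auto simp: card_insert_if)
    ultimately have "card E \<le> 3" using card_mono[of "{{x,y},{y,z},{x,z}}" E] by simp
    then have "ce c = E" using card_subset_eq[OF fE] c cc cardE by (simp add: cyc_def)
    then show "set c = V \<and> ce c = E" using scV by simp
  qed
  have wtc: "\<And>c. cyc E c \<Longrightarrow> wt w c = sum w E" using cycs by (simp add: wt_def)
  have mxc: "\<And>c. mx E w c \<Longrightarrow> cyc E c" by (simp add: mx_def)
  have P4: "\<And>e f. e \<in> E \<Longrightarrow> f \<in> E \<Longrightarrow> e \<noteq> f \<Longrightarrow> w e + w f < sum w E"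
  proof -
    fix e f assume h: "e \<in> E" "f \<in> E" "e \<noteq> f"
    have ne: "E - {e,f} \<noteq> {}"
    proof
      assume "E - {e,f} = {}"
      then have "card E \<le> card {e,f}" by (intro card_mono) auto
      then show False using cardE h(3) by simp
    qed
    have "sum w E = sum w (E - {e,f}) + sum w {e,f}" using sum.subset_diff[of "{e,f}" E w] fE h by auto
    moreover have "0 < sum w (E - {e,f})" using ne fE pos by (intro sum_pos) auto
    ultimately show "w e + w f < sum w E" using h(3) by simp
  qed
  show ?thesis unfolding INV_def
  proof (intro conjI)
    show "\<exists>c. cyc E c" using cT by blast
    show "\<exists>x'. \<forall>c. mx E w c \<longrightarrow> x' \<in> set c" using cycs mxc V by blast
    show "\<forall>e\<in>E. \<forall>c d. mx E w c \<longrightarrow> mx E w d \<longrightarrow> wt w c \<le> 2 * w e \<longrightarrow> e \<subseteq> set d"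
      using cycs mxc graph_sub[OF g] by blast
    show "\<forall>e\<in>E. \<forall>c d. mx E w c \<longrightarrow> mx E w d \<longrightarrow> wt w c < 2 * w e \<longrightarrow> e \<in> ce d"
      using cycs mxc by blast
    show "\<forall>e\<in>E. \<forall>f\<in>E. e \<noteq> f \<longrightarrow> (\<forall>c. mx E w c \<longrightarrow> w e + w f < wt w c)"
      using P4 wtc mxc by simp
  qed
qed

lemma main:
  "k_tree 2 VH EH \<Longrightarrow> graph V E \<Longrightarrow> V \<subseteq> VH \<Longrightarrow> E \<subseteq> EH \<Longrightarrow> two_connected V E
    \<Longrightarrow> \<forall>e\<in>E. 0 < w e \<Longrightarrow> INV E w"
proof (induction arbitrary: V E w rule: k_tree.induct)
  case (base VH)
  have "card V \<le> card VH" using base by (intro card_mono) auto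
  then show ?case using base by (simp add: two_connected_def)
next
  case (step V0 E0 C v)
  note g = step.prems(1) and sV = step.prems(2) and sE = step.prems(3) and t = step.prems(4)
    and pos = step.prems(5)
  show ?case
  proof (cases "v \<in> V")
    case False
    have "E \<subseteq> E0"
    proof
      fix e assume e: "e \<in> E"
      have "e \<subseteq> V" using graph_sub[OF g e] .
      then have "v \<notin> e" using False by blast
      then show "e \<in> E0" using sE e by blast
    qed
    moreover have "V \<subseteq> V0" using sV False by blast
    ultimately show ?thesis using step.IH[OF g _ _ t pos] by blast
  next
    case vV: True
    show ?thesis
    proof (cases "card V = 3")
      case True then show ?thesis using base3[OF g t _ pos] by simp
    next
      case False
      have c4: "4 \<le> card V" using False t by (simp add: two_connected_def)
      obtain a b where C: "C = {a,b}" "a \<noteq> b" using step.hyps(3) card_2_iff by metis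
      have abE0: "{a,b} \<in> E0" using step.hyps(4) C by (simp add: is_clique_def)
      have abV0: "a \<in> V0" "b \<in> V0" using step.hyps(2) C by auto
      have avv: "a \<noteq> v" "b \<noteq> v" using abV0 step.hyps(5) by auto
      have nbr: "\<And>z. {v,z} \<in> E \<Longrightarrow> z = a \<or> z = b"
      proof -
        fix z assume z: "{v,z} \<in> E"
        have "{v,z} \<notin> E0" using kt_edges[OF step.hyps(1)] step.hyps(5) by blast
        then obtain c where c: "c \<in> C" "{v,z} = {v,c}" using sE z by blast
        have "c \<noteq> v" using c(1) step.hyps(2,5) by blast
        then have "z = c" using c(2) by (auto simp: doubleton_eq_iff)
        then show "z = a \<or> z = b" using c(1) C by simp
      qed
      have eva: "{v,a} \<in> E" using deg[OF g t vV, of b] nbr by blast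
      have evb: "{v,b} \<in> E" using deg[OF g t vV, of a] nbr by blast
      have abV: "a \<in> V" "b \<in> V" using graph_sub[OF g eva] graph_sub[OF g evb] by auto
      have fin: "finite (\<Union>E)"
      proof -
        have "\<Union>E \<subseteq> V" using graph_sub[OF g] by blast
        then show ?thesis using g finite_subset by (auto simp: graph_def)
      qed
      interpret red2 E w v a b
      proof (unfold_locales)
        fix e assume "e \<in> E"
        then show "\<exists>x y. x \<noteq> y \<and> e = {x,y}" using graph_edge[OF g] by blast
      next
        show "a \<noteq> b" by (rule C(2))
      next
        show "a \<noteq> v" by (rule avv(1))
      next
        show "b \<noteq> v" by (rule avv(2))
      next
        show "{v,a} \<in> E" by (rule eva)
      next
        show "{v,b} \<in> E" by (rule evb)
      next
        fix z assume "{v,z} \<in> E" then show "z = a \<or> z = b" by (rule nbr)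
      next
        fix e assume "e \<in> E" then show "0 < w e" using pos by blast
      next
        show "finite (\<Union>E)" by (rule fin)
      qed
      have gE': "graph (V - {v}) E'"
        unfolding graph_def E'_def
      proof (intro conjI ballI)
        show "finite (V - {v})" using g by (simp add: graph_def)
      next
        fix e assume e: "e \<in> insert {a,b} {e \<in> E. v \<notin> e}"
        show "\<exists>x y. x \<noteq> y \<and> e = {x, y} \<and> x \<in> V - {v} \<and> y \<in> V - {v}"
        proof (cases "e = {a,b}")
          case True then show ?thesis using C(2) abV avv by blast
        next
          case False
          then have "e \<in> E" "v \<notin> e" using e by auto
          then show ?thesis using graph_edge[OF g \<open>e \<in> E\<close>] by blast
        qed
      qed
      have sV': "V - {v} \<subseteq> V0" using sV by blast
      have sE': "E' \<subseteq> E0"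
      proof
        fix e assume e: "e \<in> E'"
        show "e \<in> E0"
        proof (cases "e = {a,b}")
          case True then show ?thesis using abE0 by simp
        next
          case False
          then have "e \<in> E" "v \<notin> e" using e by (auto simp: E'_def)
          then show ?thesis using sE by blast
        qed
      qed
      have t': "two_connected (V - {v}) E'"
        unfolding E'_def using two_conn_red[OF g t vV C(2) abV avv nbr c4] .
      have pos': "\<forall>e\<in>E'. 0 < w' e"
      proof
        fix e assume e: "e \<in> E'"
        show "0 < w' e"
        proof (cases "e = {a,b}")
          case True then show ?thesis using w'_ab mu_ge(1) al_pos by simp
        next
          case False
          then have "e \<in> E" using e by (auto simp: E'_def)
          then show ?thesis using w'_eq[OF False] pos by simp
        qed
      qed
      have "INV E' w'" using step.IH[OF gE' sV' sE' t' pos'] .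
      then interpret red3 E w v a b by unfold_locales
      show ?thesis by (rule red_INV)
    qed
  qed
qed

theorem corollary6p3:
  fixes V :: "'a set" and E :: "'a set set"
  assumes "graph V E"
    and "partial_k_tree 2 V E"
    and "two_connected V E"
  shows "\<exists>v\<in>V. \<forall>c. longest_cycle V E c \<longrightarrow> v \<in> set c"
proof -
  obtain VH EH where H: "k_tree 2 VH EH" "V \<subseteq> VH" "E \<subseteq> EH"
    using assms(2) by (auto simp: partial_k_tree_def)
  have I: "INV E (\<lambda>_. 1)" using main[OF H(1) assms(1) H(2,3) assms(3)] by simp
  obtain c0 where c0: "cyc E c0" using I by (auto simp: INV_def)
  obtain x where x: "\<forall>c. mx E (\<lambda>_. 1) c \<longrightarrow> x \<in> set c" using I by (auto simp: INV_def)
  have UV: "\<Union>E \<subseteq> V" using graph_sub[OF assms(1)] by blast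
  have fin: "finite (\<Union>E)" using UV assms(1) finite_subset by (auto simp: graph_def)
  obtain c1 where c1: "mx E (\<lambda>_. 1) c1" using ex_mx[OF fin c0] by blast
  have xV: "x \<in> V" using x c1 cyc_set_sub[of E c1] UV by (auto simp: mx_def)
  have "\<forall>c. longest_cycle V E c \<longrightarrow> x \<in> set c"
  proof (intro allI impI)
    fix c assume lc: "longest_cycle V E c"
    have cc: "cyc E c" using lc cyc_iff[OF assms(1)] by (simp add: longest_cycle_def)
    have "\<forall>d. cyc E d \<longrightarrow> wt (\<lambda>_. 1) d \<le> wt (\<lambda>_. 1) c"
    proof (intro allI impI)
      fix d assume dd: "cyc E d"
      have "is_cycle V E d" using dd cyc_iff[OF assms(1)] by simp
      then have "length d \<le> length c" using lc by (simp add: longest_cycle_def)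
      then show "wt (\<lambda>_. 1) d \<le> wt (\<lambda>_. 1) c" using wt_one[OF dd] wt_one[OF cc] by simp
    qed
    then have "mx E (\<lambda>_. 1) c" using cc by (simp add: mx_def)
    then show "x \<in> set c" using x by blast
  qed
  then show ?thesis using xV by blast
qed


end
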